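(* Let $\alpha\in\mathbb{R}$ and let $m\ge 0$ be an even integer. Let $b_0,\dots,b_m$ be the unique solution of $$\sum_{k=0}^{i}\frac{(-1)^{i-k}}{i-k+1}\,b_k=\frac{(-1)^{i+1}}{i+2}-\binom{-\alpha}{i+1},\qquad i=0,1,\dots,m,$$ and set $c_i=\sum_{k=i}^{m}\binom{k}{i}(-1)^{k-i}b_k$ for $i=0,\dots,m$. Then for every integer $n\ge 0$, every $h>0$, and every real polynomial $f$ of degree at most $m+1$, $$\int_{-\alpha h}^{(n+\alpha)h} f(t)\,dt \;=\; h\sum_{i=0}^{n} f(ih)\;+\;h\sum_{i=0}^{m} c_i\Big[f(ih)+f\big((n-i)h\big)\Big].$$
   Context: For real $x$ and integer $j\ge 0$, $\binom{x}{j}$ denotes the generalized binomial coefficient $x(x-1)\cdots(x-j+1)/j!$ (with $\binom{x}{0}=1$). The integral limits are oriented, and nodes outside $[0,nh]$ (when $\alpha<0$ or $m>n$) are used literally. *)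

theory Defs
  imports "HOL-Analysis.Analysis" "HOL-Computational_Algebra.Polynomial"
begin

end

theory Submission
  imports Defs
begin

definition fd :: "real poly \<Rightarrow> real poly" where "fd p = pcompose p [:1,1:] - p"
definition Bp :: "nat \<Rightarrow> real poly" where
  "Bp j = smult (1 / fact j) (\<Prod>i=0..<j. [:- of_nat i, 1:])"

lemma poly_fd[simp]: "poly (fd p) x = poly p (x + 1) - poly p x"
  by (simp add: fd_def poly_pcompose algebra_simps)

lemma poly_Bp[simp]: "poly (Bp j) x = x gchoose j"
  by (simp add: Bp_def gbinomial_prod_rev poly_prod)

lemma fd_add: "fd (p + q) = fd p + fd q"
  by (simp add: fd_def pcompose_add)
lemma fd_smult: "fd (smult c p) = smult c (fd p)"
  by (simp add: fd_def pcompose_smult smult_diff_right)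

lemma fd_const: "degree p = 0 \<Longrightarrow> fd p = 0"
  by (metis degree_eq_zeroE diff_self fd_def pcompose_const)

lemma fd_degree: assumes "degree p \<le> Suc d" shows "degree (fd p) \<le> d"
proof (cases "degree p = Suc d")
  case False
  have "degree (pcompose p [:1,1:]) = degree p" by (simp add: degree_pcompose)
  then have "degree (fd p) \<le> degree p" unfolding fd_def
    by (metis degree_diff_le order_refl)
  then show ?thesis using False assms by linarith
next
  case True
  have dc: "degree (pcompose p [:1,1:]) = Suc d" using True by (simp add: degree_pcompose)
  have lc: "lead_coeff (pcompose p [:1,1:]) = lead_coeff p"
    using lead_coeff_comp[of "[:1,1:]" p] by simp
  have "coeff (fd p) (Suc d) = 0" unfolding fd_def using lc dc True by simp
  moreover have "degree (fd p) \<le> Suc d" unfolding fd_def using dc True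
    by (metis degree_diff_le order_refl)
  ultimately show ?thesis
    by (metis degree_le coeff_eq_0 le_antisym not_less_eq_eq order.strict_trans1 Suc_lessI)
qed

lemma fd_pow_degree: "degree p \<le> d \<Longrightarrow> degree ((fd ^^ j) p) \<le> d - j"
proof (induction j)
  case 0 then show ?case by simp
next
  case (Suc j)
  then have h: "degree ((fd ^^ j) p) \<le> d - j" by simp
  show ?case
  proof (cases "d - j")
    case 0
    then have "(fd ^^ Suc j) p = 0" using h fd_const by simp
    then show ?thesis by simp
  next
    case (Suc k)
    then show ?thesis using h fd_degree[of "(fd ^^ j) p" k] by simp
  qed
qed

lemma fd_pow_zero: "degree p \<le> d \<Longrightarrow> d < j \<Longrightarrow> (fd ^^ j) p = 0"
proof -
  assume a: "degree p \<le> d" "d < j"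
  then obtain k where k: "j = Suc k" "d \<le> k" by (cases j) auto
  have "degree ((fd ^^ k) p) \<le> 0" using fd_pow_degree[OF a(1), of k] k by simp
  then show ?thesis using k fd_const by simp
qed

lemma Bp_fd: "fd (Bp (Suc j)) = Bp j"
  by (rule iffD1[OF poly_eq_poly_eq_iff]) (simp add: fun_eq_iff gbinomial_Suc_Suc)


lemma Bp_0[simp]: "Bp 0 = 1" by (simp add: Bp_def)

lemma periodic_poly_zero:
  fixes G :: "real poly"
  assumes per: "\<And>x. poly G (x + 1) = poly G x" and z: "poly G 0 = 0"
  shows "G = 0"
proof (rule ccontr)
  assume "G \<noteq> 0"
  then have fin: "finite {x. poly G x = 0}" by (rule poly_roots_finite)
  have "poly G (real k) = 0" for k
    by (induction k) (simp add: z, metis per of_nat_Suc add.commute)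
  then have "range real \<subseteq> {x. poly G x = 0}" by auto
  then have "finite (range real)" using fin finite_subset by blast
  moreover have "infinite (range real)"
    using range_inj_infinite[of real] inj_of_nat by blast
  ultimately show False by blast
qed

lemma newton:
  "degree p \<le> d \<Longrightarrow> p = (\<Sum>j\<le>d. smult (poly ((fd ^^ j) p) 0) (Bp j))"
proof (induction d arbitrary: p)
  case 0
  then obtain c where "p = [:c:]" by (metis degree_eq_zeroE le_zero_eq)
  then show ?case by simp
next
  case (Suc d)
  define a where "a j = poly ((fd ^^ j) p) 0" for j
  have IH: "fd p = (\<Sum>j\<le>d. smult (a (Suc j)) (Bp j))"
    using Suc.IH[OF fd_degree[OF Suc.prems]] by (simp add: a_def funpow_Suc_right del: funpow.simps)
  define G where "G = p - (\<Sum>j\<le>Suc d. smult (a j) (Bp j))"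
  have per: "poly G (x + 1) = poly G x" for x
  proof -
    have "poly G (x + 1) - poly G x = poly (fd p) x
        - (\<Sum>j\<le>Suc d. a j * (((x + 1) gchoose j) - (x gchoose j)))"
      by (simp add: G_def poly_sum algebra_simps sum_subtractf)
    also have "(\<Sum>j\<le>Suc d. a j * (((x + 1) gchoose j) - (x gchoose j)))
        = (\<Sum>j\<le>d. a (Suc j) * (x gchoose j))"
      by (subst sum.atMost_Suc_shift) (simp add: gbinomial_Suc_Suc)
    also have "\<dots> = poly (fd p) x" by (subst IH) (simp add: poly_sum)
    finally show ?thesis by simp
  qed
  have z: "poly G 0 = 0"
    unfolding G_def poly_diff poly_sum sum.atMost_Suc_shift by (simp add: a_def poly_sum del: funpow.simps)
  have "G = 0" by (rule periodic_poly_zero[OF per z])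
  then show ?case by (simp add: G_def a_def)
qed


lemma fdsum_Suc:
  fixes g :: "nat \<Rightarrow> real"
  shows "(\<Sum>i\<le>Suc k. real (Suc k choose i) * (-1)^(Suc k - i) * g i)
       = (\<Sum>i\<le>k. real (k choose i) * (-1)^(k-i) * (g (Suc i) - g i))"
proof -
  have A: "(\<Sum>i\<le>Suc k. real (Suc k choose i) * (-1)^(Suc k - i) * g i)
      = (-1)^(Suc k) * g 0 + (\<Sum>i\<le>k. real (Suc k choose Suc i) * (-1)^(k - i) * g (Suc i))"
    by (subst sum.atMost_Suc_shift) simp
  have B: "(\<Sum>i\<le>k. real (Suc k choose Suc i) * (-1)^(k - i) * g (Suc i))
      = (\<Sum>i\<le>k. real (k choose i) * (-1)^(k - i) * g (Suc i))
        + (\<Sum>i\<le>k. real (k choose Suc i) * (-1)^(k - i) * g (Suc i))"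
    by (simp add: sum.distrib[symmetric] algebra_simps)
  have C: "(\<Sum>i\<le>k. real (k choose Suc i) * (-1)^(k - i) * g (Suc i))
      = - (\<Sum>i\<le>k. real (k choose i) * (-1)^(k - i) * g i) + (-1)^k * g 0"
  proof -
    have "(\<Sum>i\<le>k. real (k choose i) * (-1)^(k - i) * g i)
        = (-1)^k * g 0 + (\<Sum>i<k. real (k choose Suc i) * (-1)^(k - Suc i) * g (Suc i))"
      by (subst sum.atMost_shift) simp
    also have "(\<Sum>i<k. real (k choose Suc i) * (-1)^(k - Suc i) * g (Suc i))
        = (\<Sum>i\<le>k. real (k choose Suc i) * (-1)^(k - Suc i) * g (Suc i))"
      by (simp add: lessThan_Suc_atMost[symmetric])
    also have "\<dots> = - (\<Sum>i\<le>k. real (k choose Suc i) * (-1)^(k - i) * g (Suc i))"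
    proof -
      have "real (k choose Suc i) * (-1)^(k - Suc i) * g (Suc i)
          = - (real (k choose Suc i) * (-1)^(k - i) * g (Suc i))" if "i \<le> k" for i
      proof (cases "i = k")
        case True then show ?thesis by simp
      next
        case False
        then have "k - i = Suc (k - Suc i)" using that by simp
        then show ?thesis by simp
      qed
      then show ?thesis by (simp add: sum_negf[symmetric])
    qed
    finally show ?thesis by simp
  qed
  show ?thesis unfolding A B C
    by (simp add: sum_subtractf algebra_simps)
qed

lemma poly_fd_pow:
  "poly ((fd ^^ k) p) x = (\<Sum>i\<le>k. real (k choose i) * (-1)^(k-i) * poly p (x + real i))"
proof (induction k arbitrary: p)
  case 0 then show ?case by simp
next
  case (Suc k)
  have "poly ((fd ^^ Suc k) p) x = poly ((fd ^^ k) (fd p)) x"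
    by (simp add: funpow_Suc_right del: funpow.simps)
  also have "\<dots> = (\<Sum>i\<le>k. real (k choose i) * (-1)^(k-i) * (poly p (x + real (Suc i)) - poly p (x + real i)))"
    by (simp add: Suc.IH ac_simps)
  also have "\<dots> = (\<Sum>i\<le>Suc k. real (Suc k choose i) * (-1)^(Suc k-i) * poly p (x + real i))"
    by (rule fdsum_Suc[of k "\<lambda>i. poly p (x + real i)", symmetric])
  finally show ?case .
qed


lemma pderiv_sum: "pderiv (sum f A) = (\<Sum>x\<in>A. pderiv (f x))"
  using higher_pderiv_sum[of 1 f A] by simp

lemma pderiv_Bp_0: "poly (pderiv (Bp (Suc k))) 0 = (-1)^k / real (Suc k)"
proof -
  define Q where "Q = (\<Prod>i=0..<k. [:- of_nat (Suc i), 1::real:])"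
  have "Bp (Suc k) = smult (1 / fact (Suc k)) ([:0,1:] * Q)"
    unfolding Bp_def Q_def by (subst prod.atLeast0_lessThan_Suc_shift) simp
  then have "poly (pderiv (Bp (Suc k))) 0 = poly Q 0 / fact (Suc k)"
    by (simp add: pderiv_smult pderiv_mult pderiv_pCons)
  also have "poly Q 0 = (\<Prod>i=0..<k. - real (Suc i))"
    by (simp add: Q_def poly_prod)
  also have "\<dots> = (-1)^k * fact k"
    by (induction k) (simp_all add: fact_Suc algebra_simps)
  also have "(-1)^k * fact k / fact (Suc k) = (-1)^k / (real (Suc k) :: real)"
    by (simp add: fact_Suc)
  finally show ?thesis .
qed

lemma pderiv_Bp_0': "poly (pderiv (Bp 0)) 0 = 0" by simp

lemma K:
  assumes "degree H \<le> d"
  shows "poly (pderiv H) x = (\<Sum>j=1..d. (-1)^(j-1) / real j * poly ((fd^^j) H) x)"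
proof -
  define Q where "Q = pcompose H [:x,1:]"
  have dQ: "degree Q \<le> d" using assms by (simp add: Q_def degree_pcompose)
  have fq: "poly ((fd^^j) Q) 0 = poly ((fd^^j) H) x" for j
    by (simp add: poly_fd_pow Q_def poly_pcompose ac_simps)
  have "Q = (\<Sum>j\<le>d. smult (poly ((fd ^^ j) Q) 0) (Bp j))" by (rule newton[OF dQ])
  then have "pderiv Q = (\<Sum>j\<le>d. smult (poly ((fd ^^ j) H) x) (pderiv (Bp j)))"
    by (metis (no_types, lifting) fq pderiv_smult pderiv_sum sum.cong)
  then have "poly (pderiv Q) 0 = (\<Sum>j\<le>d. poly ((fd ^^ j) H) x * poly (pderiv (Bp j)) 0)"
    by (simp add: poly_sum)
  also have "\<dots> = (\<Sum>j<d. poly ((fd ^^ Suc j) H) x * ((-1)^j / real (Suc j)))"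
    by (subst sum.atMost_shift) (simp add: pderiv_Bp_0 del: funpow.simps)
  also have "\<dots> = (\<Sum>j=1..d. (-1)^(j-1) / real j * poly ((fd^^j) H) x)"
    unfolding One_nat_def sum.atLeast1_atMost_eq by (simp add: mult.commute del: funpow.simps)
  finally have "poly (pderiv Q) 0 = (\<Sum>j=1..d. (-1)^(j-1) / real j * poly ((fd^^j) H) x)" .
  moreover have "poly (pderiv Q) 0 = poly (pderiv H) x"
    by (simp add: Q_def pderiv_pcompose poly_pcompose pderiv_pCons)
  ultimately show ?thesis by simp
qed


lemma pderiv_fd: "pderiv (fd p) = fd (pderiv p)"
  by (simp add: fd_def pderiv_diff pderiv_pcompose pderiv_pCons)

lemma pderiv_fd_pow: "pderiv ((fd^^k) p) = (fd^^k) (pderiv p)"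
  by (induction k) (simp_all add: pderiv_fd)

lemma degree_fd_le: "degree (fd p) \<le> degree p"
proof (cases "degree p")
  case 0 then show ?thesis by (simp add: fd_const)
next
  case (Suc k) then show ?thesis using fd_degree[of p k] by simp
qed

lemma degree_fd_pow_le: "degree ((fd^^k) p) \<le> degree p"
  by (induction k) (simp_all, meson degree_fd_le order_trans)

lemma fd_pow_Suc': "(fd^^(Suc r)) p = (fd^^r) (fd p)"
  by (simp add: funpow_Suc_right del: funpow.simps)

lemma discrete_antideriv:
  assumes "degree P \<le> d"
  shows "\<exists>H. fd H = P \<and> degree H \<le> Suc d"
proof -
  define H where "H = (\<Sum>j\<le>d. smult (poly ((fd ^^ j) P) 0) (Bp (Suc j)))"
  have "fd H = (\<Sum>j\<le>d. smult (poly ((fd ^^ j) P) 0) (Bp j))"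
  proof -
    have "poly (fd H) x = poly (\<Sum>j\<le>d. smult (poly ((fd ^^ j) P) 0) (Bp j)) x" for x
    proof -
      have "poly (fd H) x = (\<Sum>j\<le>d. poly ((fd^^j) P) 0 * (((x+1) gchoose Suc j) - (x gchoose Suc j)))"
        by (simp add: H_def poly_sum sum_subtractf[symmetric] right_diff_distrib del: funpow.simps)
      also have "\<dots> = (\<Sum>j\<le>d. poly ((fd^^j) P) 0 * (x gchoose j))"
        by (simp add: gbinomial_Suc_Suc del: funpow.simps)
      finally show ?thesis by (simp add: poly_sum del: funpow.simps)
    qed
    then show ?thesis by (simp add: poly_eq_poly_eq_iff[symmetric] fun_eq_iff)
  qed
  also have "\<dots> = P" using newton[OF assms] by simp
  finally have 1: "fd H = P" .
  have dB: "degree (Bp j) \<le> j" for j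
  proof -
    have "degree (\<Prod>i=0..<j. [:- of_nat i, 1::real:]) \<le> (\<Sum>i=0..<j. 1)"
      by (rule order_trans[OF degree_prod_sum_le]) (simp_all add: o_def)
    then show ?thesis unfolding Bp_def by (simp add: order_trans[OF degree_smult_le])
  qed
  have "degree H \<le> Suc d" unfolding H_def
    by (rule degree_sum_le) (auto intro: order_trans[OF degree_smult_le] order_trans[OF dB])
  with 1 show ?thesis by blast
qed

lemma antideriv_exists: "\<exists>F::real poly. pderiv F = f"
proof -
  define F where "F = (\<Sum>j\<le>degree f. monom (coeff f j / real (Suc j)) (Suc j))"
  have "pderiv F = (\<Sum>j\<le>degree f. monom (coeff f j) j)"
    by (simp add: F_def pderiv_sum pderiv_monom)
  also have "\<dots> = f" by (rule poly_as_sum_of_monoms)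
  finally show ?thesis by blast
qed


lemma swap_tri:
  fixes f :: "nat \<Rightarrow> nat \<Rightarrow> real"
  shows "(\<Sum>i=0..m. \<Sum>k=i..m. f i k) = (\<Sum>k=0..m. \<Sum>i=0..k. f i k)"
proof -
  have "(\<Sum>i=0..m. \<Sum>k=i..m. f i k) = (\<Sum>i\<in>{0..m}. \<Sum>k\<in>{k\<in>{0..m}. i \<le> k}. f i k)"
    by (rule sum.cong) (auto intro!: sum.cong)
  also have "\<dots> = (\<Sum>k\<in>{0..m}. \<Sum>i\<in>{i\<in>{0..m}. i \<le> k}. f i k)"
    by (rule sum.swap_restrict) auto
  also have "\<dots> = (\<Sum>k=0..m. \<Sum>i=0..k. f i k)"
    by (rule sum.cong) (auto intro!: sum.cong)
  finally show ?thesis .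
qed

lemma left_lemma:
  fixes \<alpha> :: real and m :: nat and b :: "nat \<Rightarrow> real"
  assumes sys: "\<And>i. i \<le> m \<Longrightarrow>
      (\<Sum>k=0..i. (-1) ^ (i - k) / real (i - k + 1) * b k)
        = (-1) ^ (i + 1) / real (i + 2) - ((- \<alpha>) gchoose (i + 1))"
    and dP: "degree P \<le> m + 1" and fH: "fd H = P" and dH: "degree H \<le> m + 2"
  shows "(\<Sum>i=0..m. (\<Sum>k=i..m. real (k choose i) * (-1) ^ (k - i) * b k) * poly (pderiv P) (real i))
       = poly (pderiv H) 0 - poly P (- \<alpha>)"
proof -
  define a where "a r = poly ((fd^^r) P) 0" for r
  have a0: "a r = 0" if "m + 1 < r" for r
    using fd_pow_zero[OF dP that] by (simp add: a_def)
  have "(\<Sum>i=0..m. (\<Sum>k=i..m. real (k choose i) * (-1) ^ (k - i) * b k) * poly (pderiv P) (real i))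
      = (\<Sum>i=0..m. \<Sum>k=i..m. b k * (real (k choose i) * (-1) ^ (k - i) * poly (pderiv P) (real i)))"
    by (simp only: sum_distrib_right) (simp add: mult_ac)
  also have "\<dots> = (\<Sum>k=0..m. \<Sum>i=0..k. b k * (real (k choose i) * (-1) ^ (k - i) * poly (pderiv P) (real i)))"
    by (rule swap_tri)
  also have "\<dots> = (\<Sum>k=0..m. b k * poly ((fd^^k) (pderiv P)) 0)"
    by (simp add: poly_fd_pow sum_distrib_left atLeast0AtMost del: funpow.simps)
  also have "\<dots> = (\<Sum>k=0..m. b k * (\<Sum>j=1..m+1. (-1)^(j-1) / real j * a (j + k)))"
  proof (rule sum.cong[OF refl])
    fix k
    have "poly ((fd^^k) (pderiv P)) 0 = poly (pderiv ((fd^^k) P)) 0"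
      by (simp add: pderiv_fd_pow)
    also have "\<dots> = (\<Sum>j=1..m+1. (-1)^(j-1) / real j * poly ((fd^^j) ((fd^^k) P)) 0)"
      by (rule K) (rule order_trans[OF degree_fd_pow_le dP])
    also have "\<dots> = (\<Sum>j=1..m+1. (-1)^(j-1) / real j * a (j + k))"
      by (simp add: a_def funpow_add del: funpow.simps)
    finally show "b k * poly ((fd^^k) (pderiv P)) 0 = b k * (\<Sum>j=1..m+1. (-1)^(j-1) / real j * a (j + k))"
      by simp
  qed
  also have "\<dots> = (\<Sum>k\<le>m. \<Sum>j\<le>m. b k * ((-1)^j / real (j + 1) * a (k + j + 1)))"
  proof -
    have "(\<Sum>j=1..m+1. (-1)^(j-1) / real j * a (j + k)) = (\<Sum>j\<le>m. (-1)^j / real (j + 1) * a (k + j + 1))" for k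
    proof -
      have "(\<Sum>j=1..m+1. (-1)^(j-1) / real j * a (j + k)) = (\<Sum>j=Suc 0..Suc m. (-1)^(j-1) / real j * a (j + k))"
        by simp
      also have "\<dots> = (\<Sum>j<Suc m. (-1)^j / real (Suc j) * a (Suc j + k))"
        by (subst sum.atLeast1_atMost_eq) simp
      also have "\<dots> = (\<Sum>j\<le>m. (-1)^j / real (j + 1) * a (k + j + 1))"
        by (simp add: lessThan_Suc_atMost ac_simps)
      finally show ?thesis .
    qed
    then show ?thesis by (simp add: atLeast0AtMost sum_distrib_left)
  qed
  also have "\<dots> = (\<Sum>(k,j)\<in>{..m}\<times>{..m}. b k * ((-1)^j / real (j + 1) * a (k + j + 1)))"
    by (simp add: sum.cartesian_product)
  also have "\<dots> = (\<Sum>(k,j)\<in>{(k,j). k + j \<le> m}. b k * ((-1)^j / real (j + 1) * a (k + j + 1)))"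
  proof (rule sum.mono_neutral_right)
    show "\<forall>x\<in>{..m} \<times> {..m} - {(k, j). k + j \<le> m}.
       (case x of (k, j) \<Rightarrow> b k * ((- 1) ^ j / real (j + 1) * a (k + j + 1))) = 0"
    proof
      fix x assume x: "x \<in> {..m} \<times> {..m} - {(k, j). k + j \<le> m}"
      obtain k j where kj: "x = (k, j)" by fastforce
      have "m + 1 < k + j + 1" using x kj by auto
      then show "(case x of (k, j) \<Rightarrow> b k * ((- 1) ^ j / real (j + 1) * a (k + j + 1))) = 0"
        using kj a0 by simp
    qed
  qed auto
  also have "\<dots> = (\<Sum>s\<le>m. \<Sum>k\<le>s. b k * ((-1)^(s - k) / real (s - k + 1) * a (k + (s - k) + 1)))"
    by (rule sum.triangle_reindex_eq)
  also have "\<dots> = (\<Sum>s\<le>m. a (s + 1) * (\<Sum>k=0..s. (-1)^(s - k) / real (s - k + 1) * b k))"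
    by (rule sum.cong[OF refl]) (auto simp: sum_distrib_left atLeast0AtMost intro!: sum.cong)
  also have "\<dots> = (\<Sum>s\<le>m. a (s + 1) * ((-1) ^ (s + 1) / real (s + 2) - ((- \<alpha>) gchoose (s + 1))))"
    by (rule sum.cong[OF refl], subst sys) auto
  finally have L: "(\<Sum>i=0..m. (\<Sum>k=i..m. real (k choose i) * (-1) ^ (k - i) * b k) * poly (pderiv P) (real i))
     = (\<Sum>s\<le>m. a (s + 1) * ((-1) ^ (s + 1) / real (s + 2) - ((- \<alpha>) gchoose (s + 1))))" .
  have H': "poly (pderiv H) 0 = (\<Sum>r\<le>m+1. (-1)^r / real (r + 1) * a r)"
  proof -
    have "poly (pderiv H) 0 = (\<Sum>j=1..m+2. (-1)^(j-1) / real j * poly ((fd^^j) H) 0)"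
      by (rule K[OF dH])
    also have "\<dots> = (\<Sum>j=Suc 0..Suc (m+1). (-1)^(j-1) / real j * poly ((fd^^j) H) 0)"
      by simp
    also have "\<dots> = (\<Sum>r<Suc (m+1). (-1)^r / real (Suc r) * poly ((fd^^(Suc r)) H) 0)"
      by (subst sum.atLeast1_atMost_eq) simp
    also have "\<dots> = (\<Sum>r\<le>m+1. (-1)^r / real (r + 1) * a r)"
      unfolding lessThan_Suc_atMost a_def fd_pow_Suc' fH by simp
    finally show ?thesis .
  qed
  have Pa: "poly P (-\<alpha>) = (\<Sum>r\<le>m+1. a r * ((-\<alpha>) gchoose r))"
  proof -
    have "poly P (-\<alpha>) = poly (\<Sum>j\<le>m+1. smult (poly ((fd ^^ j) P) 0) (Bp j)) (-\<alpha>)"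
      using newton[OF dP] by simp
    then show ?thesis by (simp add: poly_sum a_def del: funpow.simps)
  qed
  have "poly (pderiv H) 0 - poly P (- \<alpha>) = (\<Sum>r\<le>m+1. a r * ((-1)^r / real (r + 1) - ((-\<alpha>) gchoose r)))"
    unfolding H' Pa by (simp add: sum_subtractf[symmetric] algebra_simps)
  also have "\<dots> = (\<Sum>s\<le>m. a (s + 1) * ((-1) ^ (s + 1) / real (s + 2) - ((- \<alpha>) gchoose (s + 1))))"
    by (subst Suc_eq_plus1[symmetric], subst sum.atMost_Suc_shift) (simp add: add.commute)
  finally show ?thesis using L by simp
qed


lemma core_low:
  fixes \<alpha> :: real and m :: nat and b :: "nat \<Rightarrow> real"
  assumes sys: "\<And>i. i \<le> m \<Longrightarrow>
      (\<Sum>k=0..i. (-1) ^ (i - k) / real (i - k + 1) * b k)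
        = (-1) ^ (i + 1) / real (i + 2) - ((- \<alpha>) gchoose (i + 1))"
    and dg: "degree g \<le> m" and pG: "pderiv G = g"
  shows "poly G (real n + \<alpha>) - poly G (-\<alpha>) = (\<Sum>i=0..n. poly g (real i))
     + (\<Sum>i=0..m. (\<Sum>k=i..m. real (k choose i) * (-1) ^ (k - i) * b k)
                 * (poly g (real i) + poly g (real n - real i)))"
proof -
  define c where "c i = (\<Sum>k=i..m. real (k choose i) * (-1) ^ (k - i) * b k)" for i
  have dG: "degree G \<le> m + 1" using dg pG degree_pderiv[of G] by simp
  obtain H where fH: "fd H = G" and dH: "degree H \<le> m + 2"
    using discrete_antideriv[OF dG] by auto
  have L: "(\<Sum>i=0..m. c i * poly g (real i)) = poly (pderiv H) 0 - poly G (-\<alpha>)"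
    using left_lemma[OF sys dG fH dH] pG by (simp add: c_def)
  define Gt where "Gt = - pcompose G [:real n, -1:]"
  define Ht where "Ht = pcompose H [:real n + 1, -1:]"
  have fHt: "fd Ht = Gt"
  proof -
    have "poly (fd Ht) x = poly Gt x" for x
    proof -
      have "poly (fd Ht) x = poly H (real n - x) - poly H (real n - x + 1)"
        by (simp add: Ht_def poly_pcompose algebra_simps)
      also have "\<dots> = - poly (fd H) (real n - x)" by simp
      also have "\<dots> = poly Gt x" by (simp add: fH Gt_def poly_pcompose algebra_simps)
      finally show ?thesis .
    qed
    then show ?thesis by (simp add: poly_eq_poly_eq_iff[symmetric] fun_eq_iff)
  qed
  have dGt: "degree Gt \<le> m + 1" using dG by (simp add: Gt_def degree_pcompose)
  have dHt: "degree Ht \<le> m + 2" using dH by (simp add: Ht_def degree_pcompose)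
  have pGt: "poly (pderiv Gt) x = poly g (real n - x)" for x
    by (simp add: Gt_def pderiv_minus pderiv_pcompose pderiv_pCons pG poly_pcompose)
  have pHt: "poly (pderiv Ht) 0 = - poly (pderiv H) (real n + 1)"
    by (simp add: Ht_def pderiv_pcompose pderiv_pCons poly_pcompose)
  have R: "(\<Sum>i=0..m. c i * poly g (real n - real i)) = - poly (pderiv H) (real n + 1) + poly G (real n + \<alpha>)"
  proof -
    have "(\<Sum>i=0..m. c i * poly g (real n - real i)) = poly (pderiv Ht) 0 - poly Gt (-\<alpha>)"
      using left_lemma[OF sys dGt fHt dHt] by (simp only: c_def pGt)
    then show ?thesis by (simp add: pHt Gt_def poly_pcompose)
  qed
  have fdH': "fd (pderiv H) = g" using pderiv_fd[of H] fH pG by simp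
  have S: "(\<Sum>i=0..n. poly g (real i)) = poly (pderiv H) (real n + 1) - poly (pderiv H) 0"
  proof -
    have "(\<Sum>i=0..n. poly g (real i)) = (\<Sum>i=0..n. poly (pderiv H) (real (Suc i)) - poly (pderiv H) (real i))"
      by (simp add: fdH'[symmetric] add.commute)
    also have "\<dots> = poly (pderiv H) (real (Suc n)) - poly (pderiv H) (real 0)"
      by (rule sum_Suc_diff) simp
    finally show ?thesis by (simp add: add.commute)
  qed
  show ?thesis
    unfolding c_def[symmetric] distrib_left sum.distrib L R S by simp
qed


lemma core:
  fixes \<alpha> :: real and m :: nat and b :: "nat \<Rightarrow> real"
  assumes ev: "even m"
    and sys: "\<And>i. i \<le> m \<Longrightarrow>
      (\<Sum>k=0..i. (-1) ^ (i - k) / real (i - k + 1) * b k)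
        = (-1) ^ (i + 1) / real (i + 2) - ((- \<alpha>) gchoose (i + 1))"
    and df: "degree f \<le> m + 1" and pF: "pderiv F = f"
  shows "poly F (real n + \<alpha>) - poly F (-\<alpha>) = (\<Sum>i=0..n. poly f (real i))
     + (\<Sum>i=0..m. (\<Sum>k=i..m. real (k choose i) * (-1) ^ (k - i) * b k)
                 * (poly f (real i) + poly f (real n - real i)))"
proof -
  define c where "c i = (\<Sum>k=i..m. real (k choose i) * (-1) ^ (k - i) * b k)" for i
  define p where "p = [:- (real n / 2), 1:]"
  define u where "u = p ^ (m + 1)"
  define U where "U = smult (1 / real (m + 2)) (p ^ (m + 2))"
  have pU: "pderiv U = u"
  proof -
    have "pderiv U = smult (1 / real (m + 2)) (smult (real (Suc (m+1))) (p ^ (m + 1)) * pderiv p)"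
      unfolding U_def pderiv_smult using pderiv_power_Suc[of p "m+1"] by simp
    also have "\<dots> = u" by (simp add: u_def p_def pderiv_pCons)
    finally show ?thesis .
  qed
  define a where "a = coeff f (m + 1)"
  define g where "g = f - smult a u"
  define G where "G = F - smult a U"
  have pG: "pderiv G = g" by (simp add: G_def g_def pderiv_diff pderiv_smult pF pU)
  have du: "degree u = m + 1" unfolding u_def p_def by (rule degree_linear_power)
  have cu: "coeff u (m + 1) = 1" unfolding u_def p_def by (rule coeff_linear_power)
  have dg: "degree g \<le> m"
  proof (rule degree_le, intro allI impI)
    fix i assume "m < i"
    show "coeff g i = 0"
    proof (cases "i = m + 1")
      case True then show ?thesis using cu by (simp add: g_def a_def)
    next
      case False
      then have "m + 1 < i" using \<open>m < i\<close> by simp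
      then show ?thesis using df du by (simp add: g_def coeff_eq_0)
    qed
  qed
  have low: "poly G (real n + \<alpha>) - poly G (-\<alpha>) = (\<Sum>i=0..n. poly g (real i))
     + (\<Sum>i=0..m. c i * (poly g (real i) + poly g (real n - real i)))"
    using core_low[OF sys dg pG, of n] by (simp add: c_def)
  have odd1: "odd (m + 1)" using ev by simp
  have ev2: "even (m + 2)" using ev by simp
  have pu: "poly u x = (x - real n / 2) ^ (m + 1)" for x
    by (simp only: u_def p_def poly_power poly_pCons poly_0) (simp add: algebra_simps del: power_Suc)
  have urefl: "poly u (real n - x) = - poly u x" for x
  proof -
    have "poly u (real n - x) = (- (x - real n / 2)) ^ (m + 1)" by (simp add: pu algebra_simps)
    also have "\<dots> = - poly u x" by (simp only: pu power_minus_odd[OF odd1])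
    finally show ?thesis .
  qed
  have pUx: "poly U x = (x - real n / 2) ^ (m + 2) / real (m + 2)" for x
    by (simp only: U_def p_def poly_smult poly_power poly_pCons poly_0) (simp add: algebra_simps del: power_Suc)
  have U0: "poly U (real n + \<alpha>) - poly U (-\<alpha>) = 0"
  proof -
    have e1: "-\<alpha> - real n / 2 = - (real n / 2 + \<alpha>)" by simp
    have e2: "real n + \<alpha> - real n / 2 = real n / 2 + \<alpha>" by simp
    show ?thesis unfolding pUx e1 e2 power_minus_even[OF ev2] by simp
  qed
  have S0: "(\<Sum>i=0..n. poly u (real i)) = 0"
  proof -
    have "(\<Sum>i=0..n. poly u (real i)) = (\<Sum>i=0..n. poly u (real (n + 0 - i)))"
      by (rule sum.atLeastAtMost_rev)
    also have "\<dots> = (\<Sum>i=0..n. - poly u (real i))"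
      by (rule sum.cong[OF refl]) (simp add: of_nat_diff urefl)
    finally show ?thesis by (simp add: sum_negf)
  qed
  have C0: "poly u (real i) + poly u (real n - real i) = 0" for i by (simp add: urefl)
  have "poly F (real n + \<alpha>) - poly F (-\<alpha>)
      = (poly G (real n + \<alpha>) - poly G (-\<alpha>)) + a * (poly U (real n + \<alpha>) - poly U (-\<alpha>))"
    by (simp add: G_def algebra_simps)
  also have "\<dots> = (\<Sum>i=0..n. poly g (real i))
     + (\<Sum>i=0..m. c i * (poly g (real i) + poly g (real n - real i)))" using low U0 by simp
  also have "\<dots> = (\<Sum>i=0..n. poly f (real i))
     + (\<Sum>i=0..m. c i * (poly f (real i) + poly f (real n - real i)))"
  proof -
    have "(\<Sum>i=0..n. poly f (real i)) = (\<Sum>i=0..n. poly g (real i)) + a * (\<Sum>i=0..n. poly u (real i))"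
      by (simp add: g_def sum_subtractf sum_distrib_left)
    moreover have "(\<Sum>i=0..m. c i * (poly f (real i) + poly f (real n - real i)))
        = (\<Sum>i=0..m. c i * (poly g (real i) + poly g (real n - real i)))"
      by (rule sum.cong[OF refl]) (simp add: g_def algebra_simps urefl)
    ultimately show ?thesis using S0 by simp
  qed
  finally show ?thesis by (simp add: c_def)
qed


lemma poly_integral:
  fixes f F :: "real poly"
  assumes "pderiv F = f"
  shows "interval_lebesgue_integral lborel (ereal a) (ereal b) (\<lambda>t. poly f t) = poly F b - poly F a"
proof (rule interval_integral_FTC_finite)
  show "continuous_on {min a b..max a b} (poly f)" by (rule continuous_on_poly) (rule continuous_on_id)
next
  fix x
  have "(poly F has_real_derivative poly f x) (at x)" using poly_DERIV[of F x] assms by simp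
  then show "(poly F has_vector_derivative poly f x) (at x within {min a b..max a b})"
    by (simp add: has_real_derivative_iff_has_vector_derivative has_vector_derivative_at_within)
qed

theorem mainTheorem2:
  fixes \<alpha> :: real and m :: nat and b :: "nat \<Rightarrow> real"
  assumes "even m"
    and sys: "\<And>i. i \<le> m \<Longrightarrow>
      (\<Sum>k=0..i. (-1) ^ (i - k) / real (i - k + 1) * b k)
        = (-1) ^ (i + 1) / real (i + 2) - ((- \<alpha>) gchoose (i + 1))"
  shows "\<forall>(n::nat) (h::real) (f::real poly). h > 0 \<longrightarrow> degree f \<le> m + 1 \<longrightarrow>
      interval_lebesgue_integral lborel (ereal (- \<alpha> * h)) (ereal ((real n + \<alpha>) * h)) (\<lambda>t. poly f t)
      = h * (\<Sum>i=0..n. poly f (real i * h))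
        + h * (\<Sum>i=0..m. (\<Sum>k=i..m. real (k choose i) * (-1) ^ (k - i) * b k)
                 * (poly f (real i * h) + poly f ((real n - real i) * h)))"
proof (intro allI impI)
  fix n :: nat and h :: real and f :: "real poly"
  assume h: "h > 0" and df: "degree f \<le> m + 1"
  obtain Fh where pFh: "pderiv Fh = f" using antideriv_exists by blast
  define g where "g = pcompose f [:0, h:]"
  define G where "G = smult (1 / h) (pcompose Fh [:0, h:])"
  have pG: "pderiv G = g"
    using h by (simp add: G_def g_def pderiv_smult pderiv_pcompose pFh pderiv_pCons)
  have dg: "degree g \<le> m + 1" using df h by (simp add: g_def degree_pcompose)
  note core_eq = core[OF assms(1) sys dg pG, where n=n]
  have I: "interval_lebesgue_integral lborel (ereal (- \<alpha> * h)) (ereal ((real n + \<alpha>) * h)) (\<lambda>t. poly f t)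
      = poly Fh ((real n + \<alpha>) * h) - poly Fh (- \<alpha> * h)"
    by (rule poly_integral[OF pFh])
  also have "\<dots> = h * (poly G (real n + \<alpha>) - poly G (-\<alpha>))"
    using h by (simp add: G_def poly_pcompose algebra_simps)
  also have "\<dots> = h * (\<Sum>i=0..n. poly f (real i * h))
        + h * (\<Sum>i=0..m. (\<Sum>k=i..m. real (k choose i) * (-1) ^ (k - i) * b k)
                 * (poly f (real i * h) + poly f ((real n - real i) * h)))"
  proof -
    have "poly G (real n + \<alpha>) - poly G (-\<alpha>) = (\<Sum>i=0..n. poly g (real i))
     + (\<Sum>i=0..m. (\<Sum>k=i..m. real (k choose i) * (-1) ^ (k - i) * b k)
                 * (poly g (real i) + poly g (real n - real i)))"
      by (rule core[OF assms(1) sys dg pG])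
    then show ?thesis by (simp add: g_def poly_pcompose distrib_left mult.commute)
  qed
  finally show "interval_lebesgue_integral lborel (ereal (- \<alpha> * h)) (ereal ((real n + \<alpha>) * h)) (\<lambda>t. poly f t)
      = h * (\<Sum>i=0..n. poly f (real i * h))
        + h * (\<Sum>i=0..m. (\<Sum>k=i..m. real (k choose i) * (-1) ^ (k - i) * b k)
                 * (poly f (real i * h) + poly f ((real n - real i) * h)))" .
qed

end
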